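(* Let $N \ge 1$ and $M \ge 1$ be integers, and let $\mathcal{N}_0 > 0$, $\xi \ge 1$ and $P_{const} > 0$ be real constants. For a transmit power $P \ge 0$ define \[ \eta_{MRT}^\circ(P) = \frac{N \log\left(1 + \dfrac{M P}{(N-1)P + N\mathcal{N}_0}\right)}{\xi P + P_{const}} \quad\text{and}\quad \eta_{LB}(P) = \frac{N M P}{(\xi P + P_{const})\{(N + M -1) P + N\mathcal{N}_0\}}. \] Then $\eta_{LB}(P) \le \eta_{MRT}^\circ(P)$ for all $P \ge 0$, i.e. $\eta_{LB}$ is a lower bound of $\eta_{MRT}^\circ$. Moreover, the saturation power $P_{LB}$ corresponding to $\eta_{LB}$, i.e. the power $P > 0$ at which $\eta_{LB}(P)$ is maximized, is \[ P_{LB} = \sqrt{\frac{N \mathcal{N}_0 P_{const}}{\xi(N + M -1)}}. \]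
   Context: Here $\log$ denotes the natural logarithm. In the paper's model, $\eta_{MRT}^\circ$ is the large-system (deterministic) energy efficiency of maximal ratio transmission beamforming with equal power allocation in a multi-user MISO downlink with $M$ base-station antennas and $N$ single-antenna users: $P$ is the total transmit power, $\mathcal{N}_0$ the normalized noise power, $\xi$ the power amplifier inefficiency and $P_{const}$ the constant (circuit plus static) power consumption. *)

theory Defs
  imports Complex_Main
begin

definition eta_MRT :: "nat \<Rightarrow> nat \<Rightarrow> real \<Rightarrow> real \<Rightarrow> real \<Rightarrow> real \<Rightarrow> real" where
  "eta_MRT N M N0 xi Pc P =
     real N * ln (1 + real M * P / ((real N - 1) * P + real N * N0)) / (xi * P + Pc)"

definition eta_LB :: "nat \<Rightarrow> nat \<Rightarrow> real \<Rightarrow> real \<Rightarrow> real \<Rightarrow> real \<Rightarrow> real" where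
  "eta_LB N M N0 xi Pc P =
     real N * real M * P / ((xi * P + Pc) * ((real N + real M - 1) * P + real N * N0))"

definition P_LB :: "nat \<Rightarrow> nat \<Rightarrow> real \<Rightarrow> real \<Rightarrow> real \<Rightarrow> real" where
  "P_LB N M N0 xi Pc = sqrt (real N * N0 * Pc / (xi * (real N + real M - 1)))"

end

theory Submission
  imports Defs
begin

lemma ln_lb: assumes "x \<ge> (0::real)" shows "x/(1+x) \<le> ln (1+x)"
proof -
  have "ln (1/(1+x)) \<le> 1/(1+x) - 1" using assms by (intro ln_le_minus_one) simp
  moreover have "ln (1/(1+x)) = - ln (1+x)" using assms by (simp add: ln_div)
  moreover have "1/(1+x) - 1 = - (x/(1+x))" using assms by (simp add: field_simps)
  ultimately show ?thesis by linarith
qed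

lemma part1:
  fixes N M :: nat and N0 xi Pc P :: real
  assumes "N \<ge> 1" and "M \<ge> 1" and "N0 > 0" and "xi \<ge> 1" and "Pc > 0" and "P \<ge> 0"
  shows "eta_LB N M N0 xi Pc P \<le> eta_MRT N M N0 xi Pc P"
proof -
  have N1: "real N \<ge> 1" using assms by simp
  define d where "d = (real N - 1) * P + real N * N0"
  have dp: "d > 0" unfolding d_def using assms N1 by (smt (verit) mult_nonneg_nonneg mult_pos_pos)
  define x where "x = real M * P / d"
  have x0: "x \<ge> 0" unfolding x_def using dp assms by simp
  have "x/(1+x) = real M * P / ((real N + real M - 1) * P + real N * N0)"
  proof -
    have "1 + x = (d + real M * P) / d" unfolding x_def using dp by (simp add: field_simps)
    hence "x/(1+x) = real M * P / (d + real M * P)" unfolding x_def using dp x0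
      by (simp add: divide_simps)
    thus ?thesis by (simp add: d_def algebra_simps)
  qed
  then have key: "real M * P / ((real N + real M - 1) * P + real N * N0) \<le> ln (1 + x)"
    using ln_lb[OF x0] by simp
  have D: "xi * P + Pc > 0" using assms by (smt (verit) mult_nonneg_nonneg)
  have "eta_LB N M N0 xi Pc P = real N * (real M * P / ((real N + real M - 1) * P + real N * N0)) / (xi * P + Pc)"
    unfolding eta_LB_def by (simp add: field_simps)
  also have "\<dots> \<le> real N * ln (1 + x) / (xi * P + Pc)"
    using key D by (intro divide_right_mono mult_left_mono) auto
  also have "\<dots> = eta_MRT N M N0 xi Pc P" unfolding eta_MRT_def x_def d_def by simp
  finally show ?thesis .
qed

theorem theorem1:
  fixes N M :: nat and N0 xi Pc :: real
  assumes "N \<ge> 1" and "M \<ge> 1" and "N0 > 0" and "xi \<ge> 1" and "Pc > 0"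
  shows "(\<forall>P::real. P \<ge> 0 \<longrightarrow> eta_LB N M N0 xi Pc P \<le> eta_MRT N M N0 xi Pc P)
       \<and> P_LB N M N0 xi Pc > 0
       \<and> (\<forall>P::real. P > 0 \<longrightarrow> eta_LB N M N0 xi Pc P \<le> eta_LB N M N0 xi Pc (P_LB N M N0 xi Pc))
       \<and> (\<forall>P::real. P > 0 \<and> eta_LB N M N0 xi Pc P = eta_LB N M N0 xi Pc (P_LB N M N0 xi Pc)
             \<longrightarrow> P = P_LB N M N0 xi Pc)"
proof -
  define a where "a = real N + real M - 1"
  define b where "b = real N * N0"
  define s where "s = P_LB N M N0 xi Pc"
  have a0: "a > 0" "a \<ge> 1" unfolding a_def using assms by auto
  have b0: "b > 0" unfolding b_def using assms by simp
  have xi0: "xi > 0" using assms by simp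
  have q: "real N * N0 * Pc / (xi * (real N + real M - 1)) > 0"
    using a0 b0 xi0 assms unfolding a_def b_def by simp
  have s0: "s > 0" unfolding s_def P_LB_def using q by simp
  have ss: "s^2 = Pc * b / (xi * a)" unfolding s_def P_LB_def using q
    by (simp add: a_def b_def mult.commute mult.left_commute)
  have ss2: "Pc * b = xi * a * s^2" using ss xi0 a0 by (simp add: field_simps)
  have E: "\<And>P. eta_LB N M N0 xi Pc P = real N * real M * P / ((xi * P + Pc) * (a * P + b))"
    unfolding eta_LB_def a_def b_def by simp
  have diff: "\<And>P. s * ((xi * P + Pc) * (a * P + b)) - P * ((xi * s + Pc) * (a * s + b))
      = xi * a * s * (P - s)^2"
    using ss2 by (simp add: algebra_simps power2_eq_square power3_eq_cube)
  have NM: "real N * real M > 0" using assms by simp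
  have Ds: "(xi * s + Pc) * (a * s + b) > 0" using s0 xi0 a0 b0 assms
    by (intro mult_pos_pos add_pos_pos) auto
  have main: "\<And>P. P > 0 \<Longrightarrow> eta_LB N M N0 xi Pc P \<le> eta_LB N M N0 xi Pc s
       \<and> (eta_LB N M N0 xi Pc P = eta_LB N M N0 xi Pc s \<longrightarrow> P = s)"
  proof -
    fix P :: real assume P0: "P > 0"
    have DP: "(xi * P + Pc) * (a * P + b) > 0" using P0 xi0 a0 b0 assms
      by (intro mult_pos_pos add_pos_pos) auto
    have iff: "eta_LB N M N0 xi Pc P \<le> eta_LB N M N0 xi Pc s \<longleftrightarrow>
        real N * real M * (P * ((xi * s + Pc) * (a * s + b))) \<le> real N * real M * (s * ((xi * P + Pc) * (a * P + b)))"
      unfolding E using DP Ds by (simp add: divide_le_eq le_divide_eq field_simps)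
    have iff2: "eta_LB N M N0 xi Pc P = eta_LB N M N0 xi Pc s \<longleftrightarrow>
        real N * real M * (P * ((xi * s + Pc) * (a * s + b))) = real N * real M * (s * ((xi * P + Pc) * (a * P + b)))"
      unfolding E using DP Ds by (simp add: field_simps)
    have nn: "xi * a * s * (P - s)^2 \<ge> 0" using xi0 a0 s0 by simp
    have "P * ((xi * s + Pc) * (a * s + b)) \<le> s * ((xi * P + Pc) * (a * P + b))"
      using diff[of P] nn by linarith
    hence 1: "eta_LB N M N0 xi Pc P \<le> eta_LB N M N0 xi Pc s" using iff NM
      by (simp add: mult_left_mono)
    have 2: "P = s" if h: "eta_LB N M N0 xi Pc P = eta_LB N M N0 xi Pc s"
    proof -
      have "P * ((xi * s + Pc) * (a * s + b)) = s * ((xi * P + Pc) * (a * P + b))"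
        using iff2 h NM assms(1,2) by auto
      hence "xi * a * s * (P - s)^2 = 0" using diff[of P] by linarith
      thus ?thesis using xi0 a0 s0 by simp
    qed
    show "eta_LB N M N0 xi Pc P \<le> eta_LB N M N0 xi Pc s
       \<and> (eta_LB N M N0 xi Pc P = eta_LB N M N0 xi Pc s \<longrightarrow> P = s)" using 1 2 by blast
  qed
  show ?thesis using part1[OF assms] main s0 unfolding s_def by blast
qed

end
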